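(* For $n\ge 4$, the dom-bondage number of the cycle $C_n$ is $B_{dom}(C_n)=3$ if $n\equiv 2\pmod 4$, and $B_{dom}(C_n)=2$ otherwise.
   Context: A dominated coloring of a graph is a proper coloring in which every color class is dominated by at least one vertex, i.e. for each color class $C$ there is a vertex adjacent to every vertex of $C$; $\chi_{dom}(G)$ is the minimum number of colors in a dominated coloring. The dom-bondage number $B_{dom}(G)$ is the minimum number of edges of $G$ whose removal changes the dominated chromatic number of $G$. *)

theory Defs
  imports Main
begin

definition simple_graph :: "'a set \<Rightarrow> 'a set set \<Rightarrow> bool" where
  "simple_graph V E \<longleftrightarrow> finite V \<and> (\<forall>e\<in>E. \<exists>u v. u \<in> V \<and> v \<in> V \<and> u \<noteq> v \<and> e = {u, v})"

definition proper_coloring :: "'a set \<Rightarrow> 'a set set \<Rightarrow> ('a \<Rightarrow> nat) \<Rightarrow> bool" where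
  "proper_coloring V E c \<longleftrightarrow> (\<forall>u\<in>V. \<forall>v\<in>V. {u, v} \<in> E \<longrightarrow> c u \<noteq> c v)"

definition dominated_coloring :: "'a set \<Rightarrow> 'a set set \<Rightarrow> ('a \<Rightarrow> nat) \<Rightarrow> bool" where
  "dominated_coloring V E c \<longleftrightarrow> proper_coloring V E c \<and>
     (\<forall>i \<in> c ` V. \<exists>w\<in>V. \<forall>u\<in>V. c u = i \<longrightarrow> {u, w} \<in> E)"

definition has_dominated_coloring :: "'a set \<Rightarrow> 'a set set \<Rightarrow> bool" where
  "has_dominated_coloring V E \<longleftrightarrow> (\<exists>c. dominated_coloring V E c)"

definition chi_dom :: "'a set \<Rightarrow> 'a set set \<Rightarrow> nat" where
  "chi_dom V E = (LEAST k. \<exists>c. dominated_coloring V E c \<and> card (c ` V) = k)"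

definition B_dom :: "'a set \<Rightarrow> 'a set set \<Rightarrow> nat" where
  "B_dom V E = (LEAST m. \<exists>F. F \<subseteq> E \<and> card F = m \<and> has_dominated_coloring V (E - F)
                              \<and> chi_dom V (E - F) \<noteq> chi_dom V E)"

definition cycle_edges :: "nat \<Rightarrow> nat set set" where
  "cycle_edges n = {{i, (i + 1) mod n} | i. i < n}"

end

theory Submission imports Defs begin

lemma mod1: "(a::nat) < n \<Longrightarrow> (a+1) mod n = (if a+1 = n then 0 else a+1)"
  by auto

lemma cyc_adj:
  assumes "n \<ge> 2"
  shows "{a,b} \<in> cycle_edges n \<longleftrightarrow> a<n \<and> b<n \<and> (b = (a+1) mod n \<or> a = (b+1) mod n)"
proof
  assume "{a,b} \<in> cycle_edges n"
  then obtain i where i: "i<n" "{a,b} = {i, (i+1) mod n}" unfolding cycle_edges_def by auto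
  then show "a<n \<and> b<n \<and> (b = (a+1) mod n \<or> a = (b+1) mod n)"
    using assms by (auto simp: doubleton_eq_iff)
next
  assume h: "a<n \<and> b<n \<and> (b = (a+1) mod n \<or> a = (b+1) mod n)"
  show "{a,b} \<in> cycle_edges n"
  proof (cases "b = (a+1) mod n")
    case True then show ?thesis using h unfolding cycle_edges_def by auto
  next
    case False
    then have "{a,b} = {b, (b+1) mod n}" using h by auto
    then show ?thesis using h unfolding cycle_edges_def by auto
  qed
qed

lemma modS: "(a::nat) < n \<Longrightarrow> Suc a mod n = (if Suc a = n then 0 else Suc a)"
  by (simp add: mod_Suc)

lemma cyc_adj2:
  assumes "n \<ge> 2"
  shows "{a,b} \<in> cycle_edges n \<longleftrightarrow> a<n \<and> b<n \<and> (b = a+1 \<or> a = b+1 \<or> (a = n-1 \<and> b = 0) \<or> (b = n-1 \<and> a = 0))"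
  unfolding cyc_adj[OF assms] using assms by (auto simp: modS split: if_splits)

lemma no_tri:
  assumes "n \<ge> 4" "{u,v} \<in> cycle_edges n" "{u,w} \<in> cycle_edges n" "{v,w} \<in> cycle_edges n"
  shows False
proof -
  have "n \<ge> 2" using assms by simp
  note h = assms(2-4)[unfolded cyc_adj2[OF this]]
  then show False using assms(1) by linarith
qed

lemma cyc_fin: "finite (cycle_edges n)"
  unfolding cycle_edges_def by auto

definition dcond :: "nat set \<Rightarrow> nat set set \<Rightarrow> (nat \<Rightarrow> nat) \<Rightarrow> bool" where
  "dcond V E c \<longleftrightarrow> (\<forall>u\<in>V. \<exists>w\<in>V. \<forall>v\<in>V. c v = c u \<longrightarrow> {v,w} \<in> E)"

lemma dcond_dom:
  assumes "n \<ge> 4" "E \<subseteq> cycle_edges n" "dcond {0..<n} E c"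
  shows "dominated_coloring {0..<n} E c"
  unfolding dominated_coloring_def proper_coloring_def
proof (intro conjI ballI impI)
  fix u v assume uv: "u \<in> {0..<n}" "v \<in> {0..<n}" "{u,v} \<in> E"
  show "c u \<noteq> c v"
  proof
    assume "c u = c v"
    obtain w where "w \<in> {0..<n}" "\<forall>x\<in>{0..<n}. c x = c u \<longrightarrow> {x,w} \<in> E"
      using assms(3) uv unfolding dcond_def by blast
    then have "{u,w} \<in> E" "{v,w} \<in> E" using uv \<open>c u = c v\<close> by auto
    then show False using no_tri[OF assms(1), of u v w] uv assms(2) by auto
  qed
next
  fix i assume "i \<in> c ` {0..<n}"
  then obtain u where u: "u \<in> {0..<n}" "i = c u" by auto
  then show "\<exists>w\<in>{0..<n}. \<forall>u\<in>{0..<n}. c u = i \<longrightarrow> {u, w} \<in> E"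
    using assms(3) unfolding dcond_def by auto
qed

lemma dom_dcond:
  assumes "dominated_coloring V E c" "E \<subseteq> E'"
  shows "dcond V E' c"
  using assms unfolding dominated_coloring_def dcond_def by blast

lemma chi_le: "dominated_coloring V E c \<Longrightarrow> chi_dom V E \<le> card (c ` V)"
  unfolding chi_dom_def by (rule Least_le) auto

lemma chi_ex: "has_dominated_coloring V E \<Longrightarrow> \<exists>c. dominated_coloring V E c \<and> card (c ` V) = chi_dom V E"
  unfolding chi_dom_def has_dominated_coloring_def
  by (rule LeastI_ex) auto

definition pc :: "nat \<Rightarrow> nat" where "pc i = 2*(i div 4) + i mod 2"
definition gc :: "nat \<Rightarrow> nat" where "gc a = 2*(a div 4) + min (a mod 4) 2"

lemma d4: "(x::nat) = 4*(x div 4) + x mod 4 \<and> x mod 2 = (x mod 4) mod 2 \<and> (x mod 4 = 0 \<or> x mod 4 = 1 \<or> x mod 4 = 2 \<or> x mod 4 = 3)"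
proof -
  have "x mod 4 < 4" by simp
  then have "x mod 4 = 0 \<or> x mod 4 = 1 \<or> x mod 4 = 2 \<or> x mod 4 = 3" by arith
  then show ?thesis by (simp add: mod_mod_cancel)
qed

lemma d4o:
  obtains X r where "(x::nat) = 4*X+r" "r = 0 \<or> r=1 \<or> r=2 \<or> r=3" "x div 4 = X" "x mod 4 = r" "x mod 2 = r mod 2"
proof -
  have h: "x = 4*(x div 4) + x mod 4 \<and> x mod 2 = (x mod 4) mod 2 \<and> (x mod 4 = 0 \<or> x mod 4 = 1 \<or> x mod 4 = 2 \<or> x mod 4 = 3)"
    by (rule d4)
  show ?thesis
    apply (rule that[of "x div 4" "x mod 4"])
    using h by simp_all
qed

lemma pc_lt_core: "4*X+r < 4*A+(q::nat) \<Longrightarrow> r = 0 \<or> r=1 \<or> r=2 \<or> r=3 \<Longrightarrow> q = 0 \<or> q=1 \<or> q=2 \<or> q=3 \<Longrightarrow>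
  2 * X + r mod 2 < 2 * A + min q 2"
  by (elim disjE; simp?; presburger?)

lemma pc_lt: "x < a \<Longrightarrow> pc x < gc a"
proof -
  assume xa: "x < a"
  obtain X r where x: "x = 4*X+r" "r = 0 \<or> r=1 \<or> r=2 \<or> r=3" "x div 4 = X" "x mod 4 = r" "x mod 2 = r mod 2"
    by (rule d4o)
  obtain A q where a: "a = 4*A+q" "q = 0 \<or> q=1 \<or> q=2 \<or> q=3" "a div 4 = A" "a mod 4 = q" "a mod 2 = q mod 2"
    by (rule d4o)
  have "4*X+r < 4*A+q" using xa x(1) a(1) by simp
  then show "pc x < gc a"
    unfolding pc_def gc_def x(3,5) a(3,4) using x(2) a(2) by (rule pc_lt_core)
qed

lemma pc_eq_core: "2*X + r mod 2 = 2*A + (q::nat) mod 2 \<Longrightarrow> r = 0 \<or> r=1 \<or> r=2 \<or> r=3 \<Longrightarrow> q = 0 \<or> q=1 \<or> q=2 \<or> q=3 \<Longrightarrow>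
  A = X \<and> q mod 2 = r mod 2"
  by (elim disjE; simp?; presburger?)

lemma pc_eq: "pc y = pc x \<Longrightarrow> y div 4 = x div 4 \<and> y mod 2 = x mod 2"
proof -
  assume h: "pc y = pc x"
  obtain X r where x: "x = 4*X+r" "r = 0 \<or> r=1 \<or> r=2 \<or> r=3" "x div 4 = X" "x mod 4 = r" "x mod 2 = r mod 2"
    by (rule d4o)
  obtain A q where a: "y = 4*A+q" "q = 0 \<or> q=1 \<or> q=2 \<or> q=3" "y div 4 = A" "y mod 4 = q" "y mod 2 = q mod 2"
    by (rule d4o)
  have "2*X + r mod 2 = 2*A + q mod 2" using h unfolding pc_def x(3,5) a(3,5) by simp
  then show ?thesis unfolding x(3,5) a(3,5) by (rule pc_eq_core[OF _ x(2) a(2)])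
qed

lemma dm4:
  assumes "y div 4 = (k::nat)"
  shows "(y mod 2 = 0 \<longrightarrow> y = 4*k \<or> y = 4*k+2) \<and> (y mod 2 = 1 \<longrightarrow> y = 4*k+1 \<or> y = 4*k+3)"
proof -
  obtain X r where x: "y = 4*X+r" "r = 0 \<or> r=1 \<or> r=2 \<or> r=3" "y div 4 = X" "y mod 4 = r" "y mod 2 = r mod 2"
    by (rule d4o)
  have "X = k" using x(3) assms by simp
  show ?thesis unfolding x(5) x(1) \<open>X = k\<close> using x(2) by (elim disjE; simp?; presburger?)
qed

lemma dm4a: "y div 4 = (k::nat) \<Longrightarrow> y mod 2 = 0 \<Longrightarrow> y = 4*k \<or> y = 4*k+2"
  using dm4 by metis
lemma dm4b: "y div 4 = (k::nat) \<Longrightarrow> y mod 2 = 1 \<Longrightarrow> y = 4*k+1 \<or> y = 4*k+3"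
  using dm4 by metis

lemma pc_dom:
  assumes "2 \<le> a" "x < a"
  shows "\<exists>w<a. \<forall>y<a. pc y = pc x \<longrightarrow> (y = w+1 \<or> w = y+1)"
proof -
  define k where "k = x div 4"
  have xk: "x div 4 = k" using k_def by simp
  have key: "\<And>y. pc y = pc x \<Longrightarrow> y div 4 = k \<and> y mod 2 = x mod 2" using pc_eq xk by metis
  show ?thesis
  proof (cases "x mod 2 = 0")
    case True
    have x2: "x = 4*k \<or> x = 4*k+2" by (rule dm4a[OF xk True])
    show ?thesis
    proof (cases "4*k+1 < a")
      case True
      show ?thesis
      proof (rule exI[of _ "4*k+1"], intro conjI allI impI)
        fix y assume "y < a" "pc y = pc x"
        then have "y div 4 = k" "y mod 2 = 0" using key \<open>x mod 2 = 0\<close> by auto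
        then have "y = 4*k \<or> y = 4*k+2" by (rule dm4a)
        then show "y = 4 * k + 1 + 1 \<or> 4 * k + 1 = y + 1" by auto
      qed (use True in auto)
    next
      case False
      show ?thesis
      proof (rule exI[of _ "4*k-1"], intro conjI allI impI)
        fix y assume "y < a" "pc y = pc x"
        then have "y div 4 = k" "y mod 2 = 0" using key \<open>x mod 2 = 0\<close> by auto
        then have "y = 4*k \<or> y = 4*k+2" by (rule dm4a)
        then show "y = 4 * k - 1 + 1 \<or> 4 * k - 1 = y + 1" using False \<open>y < a\<close> x2 assms by auto
      qed (use False assms x2 in auto)
    qed
  next
    case False
    then have "x mod 2 = 1" by presburger
    then have x2: "x = 4*k+1 \<or> x = 4*k+3" by (rule dm4b[OF xk])
    show ?thesis
    proof (cases "4*k+2 < a")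
      case True
      show ?thesis
      proof (rule exI[of _ "4*k+2"], intro conjI allI impI)
        fix y assume "y < a" "pc y = pc x"
        then have "y div 4 = k" "y mod 2 = 1" using key \<open>x mod 2 = 1\<close> by auto
        then have "y = 4*k+1 \<or> y = 4*k+3" by (rule dm4b)
        then show "y = 4 * k + 2 + 1 \<or> 4 * k + 2 = y + 1" by auto
      qed (use True in auto)
    next
      case F2: False
      show ?thesis
      proof (rule exI[of _ "4*k"], intro conjI allI impI)
        fix y assume "y < a" "pc y = pc x"
        then have "y div 4 = k" "y mod 2 = 1" using key \<open>x mod 2 = 1\<close> by auto
        then have "y = 4*k+1 \<or> y = 4*k+3" by (rule dm4b)
        then show "y = 4 * k + 1 \<or> 4 * k = y + 1" using F2 \<open>y < a\<close> by auto
      qed (use F2 assms x2 in auto)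
    qed
  qed
qed


lemma seg_dcond:
  assumes "2 \<le> a" "s + a \<le> n" "\<forall>z. s \<le> z \<longrightarrow> z+1 < s+a \<longrightarrow> {z,z+1} \<in> E"
    "\<forall>v\<in>{0..<n}. s \<le> v \<and> v < s+a \<longrightarrow> c v = off + pc (v - s)"
    "\<forall>v\<in>{0..<n}. \<not>(s \<le> v \<and> v < s+a) \<longrightarrow> c v < off \<or> c v \<ge> off + gc a"
    "s \<le> u" "u < s+a"
  shows "\<exists>w\<in>{0..<n}. \<forall>v\<in>{0..<n}. c v = c u \<longrightarrow> {v,w} \<in> E"
proof -
  have "u - s < a" using assms(6,7) by simp
  then obtain w0 where w0: "w0 < a" "\<forall>y<a. pc y = pc (u-s) \<longrightarrow> (y = w0+1 \<or> w0 = y+1)"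
    using pc_dom[OF assms(1)] by blast
  have cu: "c u = off + pc (u-s)" using assms(4,6,7,2) by auto
  have lt: "pc (u-s) < gc a" using pc_lt \<open>u - s < a\<close> by blast
  show ?thesis
  proof (intro bexI[of _ "s+w0"] ballI impI)
    show "s + w0 \<in> {0..<n}" using w0 assms(2) by auto
  next
    fix v assume v: "v \<in> {0..<n}" "c v = c u"
    have vs: "s \<le> v \<and> v < s+a"
    proof (rule ccontr)
      assume "\<not> (s \<le> v \<and> v < s+a)"
      then have "c v < off \<or> c v \<ge> off + gc a" using assms(5) v by auto
      then show False using v cu lt by auto
    qed
    then have "pc (v-s) = pc (u-s)" using assms(4) v cu by auto
    moreover have "v - s < a" using vs by auto
    ultimately have "v - s = w0+1 \<or> w0 = v-s+1" using w0(2) by blast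
    then show "{v, s+w0} \<in> E"
    proof
      assume h: "v - s = w0+1"
      then have "{v, s+w0} = {s+w0, (s+w0)+1}" using vs by auto
      moreover have "{s+w0, (s+w0)+1} \<in> E" using assms(3) h vs by auto
      ultimately show ?thesis by simp
    next
      assume h: "w0 = v-s+1"
      then have "{v, s+w0} = {v, v+1}" using vs by auto
      moreover have "{v, v+1} \<in> E" using assms(3) w0 h vs by auto
      ultimately show ?thesis by simp
    qed
  qed
qed


lemma pv_eq:
  assumes "(w::nat) < n" shows "(w+n-1) mod n = (if w = 0 then n-1 else w-1)"
proof (cases "w = 0")
  case True
  then show ?thesis using assms by simp
next
  case False
  then have "w+n-1 = (w-1) + n" using assms by simp
  then have "(w+n-1) mod n = (w-1) mod n" by simp
  also have "\<dots> = w - 1" using assms by simp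
  finally show ?thesis using False by simp
qed

lemma nx_eq: "(w::nat) < n \<Longrightarrow> (w+1) mod n = (if w+1 = n then 0 else w+1)"
  by auto

lemma nb:
  assumes "n \<ge> 4" "{u,w} \<in> cycle_edges n"
  shows "u = (w+n-1) mod n \<or> u = (w+1) mod n"
proof -
  have "n \<ge> 2" using assms by simp
  note h = assms(2)[unfolded cyc_adj2[OF this]]
  then have "w < n" by simp
  show ?thesis unfolding pv_eq[OF \<open>w<n\<close>] nx_eq[OF \<open>w<n\<close>] using h assms(1) by auto
qed

lemma mod2_inj: "(a::nat) < n \<Longrightarrow> b < n \<Longrightarrow> (a+2) mod n = (b+2) mod n \<Longrightarrow> a = b"
proof -
  assume a: "a < n" and b: "b < n" and e: "(a+2) mod n = (b+2) mod n"
  show "a = b"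
  proof (cases "n \<ge> 2")
    case True
    have m: "x < n + 2 \<Longrightarrow> x mod n = (if x < n then x else x - n)" for x
    proof (cases "x < n")
      case False
      assume "x < n+2"
      then have "x - n < n" using True by simp
      then show ?thesis using False by (simp add: le_mod_geq)
    qed simp
    have "(a+2) mod n = (if a+2 < n then a+2 else a+2-n)" using m a by simp
    moreover have "(b+2) mod n = (if b+2 < n then b+2 else b+2-n)" using m b by simp
    ultimately show ?thesis using e a b by (auto split: if_splits)
  next
    case False
    then show ?thesis using a b by simp
  qed
qed

lemma cnt:
  assumes "finite S" "W \<subseteq> S" "f ` W \<subseteq> S" "inj_on f W" "\<forall>w\<in>W. f w \<notin> W"
  shows "2 * card W \<le> card S"
proof -
  have fin: "finite W" using assms(1,2) finite_subset by blast
  have "W \<inter> f ` W = {}" using assms(5) by auto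
  then have "card (W \<union> f ` W) = card W + card (f ` W)"
    using fin by (simp add: card_Un_disjoint)
  also have "card (f ` W) = card W" using assms(4) by (simp add: card_image)
  finally have "card (W \<union> f ` W) = 2 * card W" by simp
  moreover have "card (W \<union> f ` W) \<le> card S"
    using assms(1,2,3) by (intro card_mono) auto
  ultimately show ?thesis by simp
qed


lemma par:
  assumes "n = 4*q+2" "W \<subseteq> {0..<n}" "\<forall>w\<in>W. (w+2) mod n \<notin> W"
  shows "card W \<le> 2*q"
proof (rule ccontr)
  assume "\<not> card W \<le> 2*q"
  then have cw: "card W \<ge> 2*q+1" by simp
  define f where "f = (\<lambda>w. (w+2) mod n)"
  have npos: "n > 0" using assms(1) by simp
  have inj: "inj_on f {0..<n}" unfolding f_def inj_on_def using mod2_inj by auto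
  have injW: "inj_on f W" using inj assms(2) inj_on_subset by blast
  have fV: "f ` {0..<n} \<subseteq> {0..<n}" unfolding f_def using npos by auto
  have "W \<inter> f ` W = {}" using assms(3) unfolding f_def by auto
  then have "card (W \<union> f ` W) = card W + card (f ` W)"
    using finite_subset[OF assms(2)] by (simp add: card_Un_disjoint)
  also have "card (f ` W) = card W" using injW by (simp add: card_image)
  finally have c2: "card (W \<union> f ` W) \<ge> n" using cw assms(1) by simp
  have sub: "W \<union> f ` W \<subseteq> {0..<n}" using assms(2) fV by auto
  have eqV: "W \<union> f ` W = {0..<n}"
    by (rule card_seteq) (use sub c2 in auto)
  have step: "f x \<in> W \<longleftrightarrow> x \<notin> W" if "x < n" for x
  proof
    assume "f x \<in> W"
    then show "x \<notin> W" using assms(3) unfolding f_def by auto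
  next
    assume xn: "x \<notin> W"
    show "f x \<in> W"
    proof (rule ccontr)
      assume "f x \<notin> W"
      moreover have "f x \<in> {0..<n}" unfolding f_def using npos by simp
      ultimately have "f x \<in> f ` W" using eqV by auto
      then obtain w where "w \<in> W" "f w = f x" by auto
      then have "w = x" using inj assms(2) that unfolding inj_on_def by auto
      then show False using xn \<open>w \<in> W\<close> by simp
    qed
  qed
  have ind: "\<forall>x<n. ((x + 2*m) mod n \<in> W \<longleftrightarrow> (x \<in> W \<longleftrightarrow> even m))" for m
  proof (induction m)
    case 0
    then show ?case by simp
  next
    case (Suc m)
    show ?case
    proof (intro allI impI)
      fix x assume "x < n"
      have "(x + 2*Suc m) mod n = ((x + 2*m) + 2) mod n" by simp
      also have "\<dots> = ((x+2*m) mod n + 2) mod n" by (rule mod_add_left_eq[symmetric])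
      finally have "(x + 2*Suc m) mod n = f ((x + 2*m) mod n)" unfolding f_def .
      moreover have "(x + 2*m) mod n < n" using npos by simp
      ultimately have "(x + 2*Suc m) mod n \<in> W \<longleftrightarrow> (x + 2*m) mod n \<notin> W" using step by simp
      then show "(x + 2*Suc m) mod n \<in> W \<longleftrightarrow> (x \<in> W \<longleftrightarrow> even (Suc m))"
        using Suc.IH \<open>x < n\<close> by auto
    qed
  qed
  have "(0 + 2*(2*q+1)) mod n = 0" using assms(1) by simp
  then have "0 \<in> W \<longleftrightarrow> (0 \<in> W \<longleftrightarrow> even (2*q+1))" using ind[of "2*q+1"] npos by metis
  then show False by simp
qed


lemma mod2_ne: "(w::nat) < n \<Longrightarrow> n \<ge> 4 \<Longrightarrow> (w+2) mod n \<noteq> w"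
proof (cases "w+2 < n")
  case False
  assume a: "w < n" "n \<ge> 4"
  then have "w + 2 - n < n" by simp
  then have "(w+2) mod n = w+2-n" using False by (simp add: le_mod_geq)
  then show ?thesis using a False by arith
qed simp

lemma low:
  assumes n4: "n \<ge> 4" and sub: "E \<subseteq> cycle_edges n" and dc: "dominated_coloring {0..<n} E c"
  shows "\<exists>W \<subseteq> {0..<n}. n \<le> card (c`{0..<n}) + card W \<and>
     (\<forall>w\<in>W. {(w+n-1) mod n, w} \<in> E \<and> {w, (w+1) mod n} \<in> E) \<and> (\<forall>w\<in>W. (w+2) mod n \<notin> W)"
proof -
  define V where "V = {0..<(n::nat)}"
  define K where "K = c ` V"
  define cls where "cls i = {v\<in>V. c v = i}" for i
  have "\<forall>i\<in>K. \<exists>w. w\<in>V \<and> (\<forall>u\<in>V. c u = i \<longrightarrow> {u,w} \<in> E)"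
    using dc unfolding dominated_coloring_def K_def V_def by blast
  then obtain dm where dm: "\<forall>i\<in>K. dm i \<in> V \<and> (\<forall>u\<in>V. c u = i \<longrightarrow> {u, dm i} \<in> E)"
    by metis
  have clsub: "cls i \<subseteq> {(dm i + n - 1) mod n, (dm i + 1) mod n}" if "i\<in>K" for i
  proof
    fix v assume "v \<in> cls i"
    then have "{v, dm i} \<in> E" using dm that unfolding cls_def by auto
    then have "{v, dm i} \<in> cycle_edges n" using sub by auto
    then show "v \<in> {(dm i + n - 1) mod n, (dm i + 1) mod n}" using nb[OF n4] by auto
  qed
  have fincls: "finite (cls i)" for i unfolding cls_def V_def by simp
  have c2: "card {a, b::nat} \<le> 2" for a b by (simp add: card_insert_if)
  have cle2: "card (cls i) \<le> 2" if "i\<in>K" for i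
    using card_mono[OF _ clsub[OF that]] c2 by (meson finite.emptyI finite.insertI le_trans)
  define K2 where "K2 = {i\<in>K. card (cls i) = 2}"
  have cls2: "cls i = {(dm i + n - 1) mod n, (dm i + 1) mod n}" if "i\<in>K2" for i
    apply (rule card_seteq)
    using clsub that c2 unfolding K2_def by auto
  have inK: "v \<in> cls i \<Longrightarrow> c v = i \<and> v \<in> V" for v i unfolding cls_def by auto
  have edges: "{(dm i + n - 1) mod n, dm i} \<in> E \<and> {dm i, (dm i + 1) mod n} \<in> E" if "i\<in>K2" for i
  proof -
    have iK: "i \<in> K" using that unfolding K2_def by auto
    have "(dm i + n - 1) mod n \<in> cls i" "(dm i + 1) mod n \<in> cls i" using cls2[OF that] by auto
    then have "{(dm i + n - 1) mod n, dm i} \<in> E" "{(dm i + 1) mod n, dm i} \<in> E"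
      using dm iK inK by blast+
    then show ?thesis by (simp add: insert_commute)
  qed
  have inj: "inj_on dm K2"
  proof (rule inj_onI)
    fix i j assume ij: "i \<in> K2" "j \<in> K2" "dm i = dm j"
    then have "cls i = cls j" using cls2 by metis
    moreover have "(dm i + 1) mod n \<in> cls i" using cls2[OF ij(1)] by auto
    ultimately show "i = j" using inK by metis
  qed
  define W where "W = dm ` K2"
  have WV: "W \<subseteq> {0..<n}" using dm unfolding W_def K2_def V_def by auto
  have no2: "\<forall>w\<in>W. (w+2) mod n \<notin> W"
  proof
    fix w assume "w \<in> W"
    then obtain i where i: "i \<in> K2" "w = dm i" unfolding W_def by auto
    show "(w+2) mod n \<notin> W"
    proof
      assume "(w+2) mod n \<in> W"
      then obtain j where j: "j \<in> K2" "(w+2) mod n = dm j" unfolding W_def by auto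
      have "((w+2) mod n + n - 1) mod n = ((w+2) mod n + (n - 1)) mod n" using n4 by simp
      also have "\<dots> = (w + 2 + (n-1)) mod n" by (rule mod_add_left_eq)
      also have "w + 2 + (n-1) = (w+1) + n" using n4 by simp
      also have "((w+1) + n) mod n = (w+1) mod n" by (rule mod_add_self2)
      finally have e: "((w+2) mod n + n - 1) mod n = (w+1) mod n" .
      have "(w+1) mod n \<in> cls j" using cls2[OF j(1)] j(2)[symmetric] e by auto
      moreover have "(w+1) mod n \<in> cls i" using cls2[OF i(1)] i(2) by auto
      ultimately have "i = j" using inK by metis
      then have "(w+2) mod n = w" using i j by simp
      moreover have "w < n" using WV \<open>w \<in> W\<close> by auto
      ultimately show False using n4 mod2_ne by metis
    qed
  qed
  have finK: "finite K" unfolding K_def V_def by simp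
  have "card V = (\<Sum>i\<in>K. card (cls i))"
  proof -
    have "card V = sum (\<lambda>_. 1::nat) V" by simp
    also have "\<dots> = (\<Sum>y\<in>c ` V. sum (\<lambda>_. 1::nat) {x\<in>V. c x = y})"
      by (rule sum.image_gen) (simp add: V_def)
    finally show ?thesis unfolding K_def cls_def by simp
  qed
  also have "\<dots> \<le> (\<Sum>i\<in>K. (1 + (if i \<in> K2 then 1 else 0)))"
  proof (rule sum_mono)
    fix i assume "i \<in> K"
    then show "card (cls i) \<le> 1 + (if i \<in> K2 then 1 else 0)"
      using cle2[of i] unfolding K2_def by auto
  qed
  also have "\<dots> = card K + (\<Sum>i\<in>K. (if i \<in> K2 then 1 else 0))"
    by (subst sum.distrib) simp
  also have "(\<Sum>i\<in>K. (if i \<in> K2 then 1 else 0)) = card (K \<inter> K2)"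
    using sum.inter_restrict[OF finK, of "\<lambda>_. 1::nat" K2] by simp
  also have "K \<inter> K2 = K2" unfolding K2_def by auto
  also have "card K2 = card W" unfolding W_def using inj by (simp add: card_image)
  finally have "n \<le> card K + card W" unfolding V_def by simp
  moreover have "\<forall>w\<in>W. {(w+n-1) mod n, w} \<in> E \<and> {w, (w+1) mod n} \<in> E"
    using edges unfolding W_def by auto
  ultimately show ?thesis using WV no2 unfolding K_def V_def by blast
qed


lemma iso_dcond:
  assumes "bij_betw f V V" "\<forall>a\<in>V. \<forall>b\<in>V. {a,b} \<in> E1 \<longleftrightarrow> {f a, f b} \<in> E2" "dcond V E2 c"
  shows "dcond V E1 (c \<circ> f)" "(c \<circ> f) ` V = c ` V"
proof -
  have fV: "f ` V = V" using assms(1) by (simp add: bij_betw_def)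
  show "(c \<circ> f) ` V = c ` V" using fV by (metis image_comp)
  show "dcond V E1 (c \<circ> f)" unfolding dcond_def
  proof
    fix u assume u: "u \<in> V"
    then have "f u \<in> V" using fV by auto
    then obtain w where w: "w \<in> V" "\<forall>v\<in>V. c v = c (f u) \<longrightarrow> {v,w} \<in> E2"
      using assms(3) unfolding dcond_def by blast
    then obtain w0 where w0: "w0 \<in> V" "w = f w0" using fV by auto
    show "\<exists>w\<in>V. \<forall>v\<in>V. (c \<circ> f) v = (c \<circ> f) u \<longrightarrow> {v, w} \<in> E1"
    proof (intro bexI[of _ w0] ballI impI)
      fix v assume v: "v \<in> V" "(c \<circ> f) v = (c \<circ> f) u"
      then have "f v \<in> V" using fV by auto
      then have "{f v, f w0} \<in> E2" using w v w0 by auto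
      then show "{v, w0} \<in> E1" using assms(2) v w0 by auto
    qed (use w0 in auto)
  qed
qed

definition rot :: "nat \<Rightarrow> nat \<Rightarrow> nat \<Rightarrow> nat" where "rot n s x = (x + s) mod n"

lemma rot_back:
  assumes "(a::nat) < n"
  shows "((a+s) mod n + (n - s mod n)) mod n = a"
proof -
  have npos: "n > 0" using assms by simp
  have "((a+s) mod n + (n - s mod n)) mod n = (a + s + (n - s mod n)) mod n"
    by (rule mod_add_left_eq)
  also have "a + s + (n - s mod n) = a + n * (s div n + 1)"
  proof -
    define r where "r = s mod n"
    define q where "q = s div n"
    have sq: "s = n * q + r" unfolding q_def r_def by simp
    have "r < n" unfolding r_def using npos by simp
    then have "a + (n*q + r) + (n - r) = a + n * (q + 1)" by (simp add: algebra_simps)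
    then show ?thesis using sq unfolding r_def[symmetric] q_def[symmetric] by simp
  qed
  also have "(a + n * (s div n + 1)) mod n = a mod n" by (rule mod_mult_self2)
  also have "a mod n = a" using assms by simp
  finally show ?thesis .
qed

lemma rot_inj: "inj_on (rot n s) {0..<n}"
proof (rule inj_onI)
  fix a b assume "a \<in> {0..<n}" "b \<in> {0..<n}" "rot n s a = rot n s b"
  then show "a = b" unfolding rot_def using rot_back[of a n s] rot_back[of b n s] by auto
qed

lemma rot_bij: "n > 0 \<Longrightarrow> bij_betw (rot n s) {0..<n} {0..<n}"
proof -
  assume "n > 0"
  then have "rot n s ` {0..<n} \<subseteq> {0..<n}" by (auto simp: rot_def)
  then have "rot n s ` {0..<n} = {0..<n}" using endo_inj_surj[OF finite_atLeastLessThan _ rot_inj] by blast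
  then show ?thesis unfolding bij_betw_def using rot_inj by blast
qed

lemma rot_nx: "rot n s ((a+1) mod n) = (rot n s a + 1) mod n"
proof -
  have "rot n s ((a+1) mod n) = (a + 1 + s) mod n" unfolding rot_def by (rule mod_add_left_eq)
  also have "\<dots> = ((a + s) + 1) mod n" by (simp add: algebra_simps)
  also have "\<dots> = ((a+s) mod n + 1) mod n" by (rule mod_add_left_eq[symmetric])
  finally show ?thesis unfolding rot_def .
qed

lemma rot_cyc:
  assumes "n \<ge> 4" "a < n" "b < n"
  shows "{a,b} \<in> cycle_edges n \<longleftrightarrow> {rot n s a, rot n s b} \<in> cycle_edges n"
proof -
  have n2: "n \<ge> 2" using assms by simp
  have lt: "rot n s x < n" for x unfolding rot_def using assms by simp
  have eq: "rot n s x = rot n s y \<longleftrightarrow> x = y" if "x < n" "y < n" for x y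
    using rot_inj[of n s] that unfolding inj_on_def by auto
  have m1: "(x+1) mod n < n" for x using assms by simp
  have r1: "(rot n s a + 1) mod n = rot n s ((a+1) mod n)" "(rot n s b + 1) mod n = rot n s ((b+1) mod n)"
    using rot_nx by simp_all
  show ?thesis unfolding cyc_adj[OF n2] r1 using lt assms eq[OF assms(3) m1[of a]] eq[OF assms(2) m1[of b]]
    by auto
qed

lemma rot_minus:
  assumes "n \<ge> 4" "F \<subseteq> cycle_edges n" "a < n" "b < n"
  shows "{a,b} \<in> cycle_edges n - F \<longleftrightarrow> {rot n s a, rot n s b} \<in> cycle_edges n - (\<lambda>e. rot n s ` e) ` F"
proof -
  have esub: "e \<subseteq> {0..<n}" if "e \<in> F" for e
  proof -
    have "e \<in> cycle_edges n" using that assms(2) by blast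
    then obtain i where "i < n" "e = {i, (i+1) mod n}" unfolding cycle_edges_def by blast
    then show ?thesis using assms by auto
  qed
  have "{rot n s a, rot n s b} \<in> (\<lambda>e. rot n s ` e) ` F \<longleftrightarrow> {a,b} \<in> F"
  proof
    assume "{rot n s a, rot n s b} \<in> (\<lambda>e. rot n s ` e) ` F"
    then obtain e where e: "e \<in> F" "{rot n s a, rot n s b} = rot n s ` e" by auto
    then have "rot n s ` {a,b} = rot n s ` e" by simp
    moreover have ab: "{a,b} \<subseteq> {0..<n}" using assms by auto
    ultimately have "{a,b} = e" using inj_on_image_eq_iff[OF rot_inj[of n s] ab esub[OF e(1)]] by simp
    then show "{a,b} \<in> F" using e by simp
  next
    assume "{a,b} \<in> F"
    then show "{rot n s a, rot n s b} \<in> (\<lambda>e. rot n s ` e) ` F" by (intro image_eqI[of _ _ "{a,b}"]) auto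
  qed
  then show ?thesis using rot_cyc[OF assms(1,3,4)] by auto
qed

lemma rot_transfer:
  assumes "n \<ge> 4" "F \<subseteq> cycle_edges n" "dcond {0..<n} (cycle_edges n - (\<lambda>e. rot n s ` e) ` F) c"
  shows "dominated_coloring {0..<n} (cycle_edges n - F) (c \<circ> rot n s) \<and> (c \<circ> rot n s) ` {0..<n} = c ` {0..<n}"
proof -
  have b: "bij_betw (rot n s) {0..<n} {0..<n}" using rot_bij assms by simp
  have e: "\<forall>a\<in>{0..<n}. \<forall>b\<in>{0..<n}. {a,b} \<in> cycle_edges n - F \<longleftrightarrow> {rot n s a, rot n s b} \<in> cycle_edges n - (\<lambda>e. rot n s ` e) ` F"
    using rot_minus[OF assms(1,2)] by auto
  show ?thesis using iso_dcond[OF b e assms(3)] dcond_dom[OF assms(1)] by auto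
qed

lemma nbr_transfer:
  assumes "n \<ge> 4" "F \<subseteq> cycle_edges n" "has_dominated_coloring {0..<n} (cycle_edges n - F)" "y < n"
  shows "\<exists>z<n. {y,z} \<in> cycle_edges n - (\<lambda>e. rot n s ` e) ` F"
proof -
  have "rot n s ` {0..<n} = {0..<n}" using rot_bij[of n s] assms(1) by (simp add: bij_betw_def)
  then obtain x where x: "x < n" "y = rot n s x" using assms(4) by force
  obtain c where c: "dominated_coloring {0..<n} (cycle_edges n - F) c"
    using assms(3) unfolding has_dominated_coloring_def by blast
  then obtain w where w: "w < n" "{x, w} \<in> cycle_edges n - F"
    unfolding dominated_coloring_def using x(1) by fastforce
  have "{rot n s x, rot n s w} \<in> cycle_edges n - (\<lambda>e. rot n s ` e) ` F"
    using rot_minus[OF assms(1,2) x(1) w(1)] w(2) by simp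
  moreover have "rot n s w < n" unfolding rot_def using assms by simp
  ultimately show ?thesis using x by blast
qed


lemma dcond_mono: "dcond V E c \<Longrightarrow> E \<subseteq> E' \<Longrightarrow> dcond V E' c"
  unfolding dcond_def by blast

lemma edge_in:
  assumes "n \<ge> 4" "z + 1 < n"
  shows "{z, z+1} \<in> cycle_edges n"
  using assms by (subst cyc_adj2) auto

lemma path_dcond:
  assumes "n \<ge> 4"
  shows "dcond {0..<n} (cycle_edges n - {{n-1, 0}}) pc"
  unfolding dcond_def
proof
  fix u assume u: "u \<in> {0..<n}"
  show "\<exists>w\<in>{0..<n}. \<forall>v\<in>{0..<n}. pc v = pc u \<longrightarrow> {v, w} \<in> cycle_edges n - {{n - 1, 0}}"
  proof (rule seg_dcond[where a=n and s=0 and off=0])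
    show "\<forall>z. 0 \<le> z \<longrightarrow> z + 1 < 0 + n \<longrightarrow> {z, z + 1} \<in> cycle_edges n - {{n - 1, 0}}"
      using edge_in[OF assms] assms by (auto simp: doubleton_eq_iff)
  qed (use assms u in auto)
qed

lemma img_card_le: "c ` V \<subseteq> {0..<(m::nat)} \<Longrightarrow> card (c ` V) \<le> m"
  using card_mono[of "{0..<m}" "c ` V"] by simp

lemma pc_img: "pc ` {0..<n} \<subseteq> {0..<gc n}"
  using pc_lt by auto

lemma p2_eq: "(w::nat) < n \<Longrightarrow> n \<ge> 2 \<Longrightarrow> (w+2) mod n = (if w+2 < n then w+2 else w+2-n)"
proof (cases "w+2 < n")
  case False
  assume a: "w < n" "n \<ge> 2"
  then have "w + 2 - n < n" by simp
  then show ?thesis using False by (simp add: le_mod_geq)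
qed simp

lemma gc_low_core:
  "4*X+r = (n::nat) \<Longrightarrow> r = 0 \<or> r=1 \<or> r=2 \<or> r=3 \<Longrightarrow> 2 * w \<le> n \<Longrightarrow> (r = 2 \<longrightarrow> w \<le> 2*X) \<Longrightarrow>
   2*X + min r 2 \<le> n - w"
  by (elim disjE; simp?; presburger?)

lemma chi_cyc:
  assumes n4: "n \<ge> 4"
  shows "chi_dom {0..<n} (cycle_edges n) = gc n"
proof (rule antisym)
  have d: "dcond {0..<n} (cycle_edges n) pc" using dcond_mono[OF path_dcond[OF n4]] by blast
  have dc: "dominated_coloring {0..<n} (cycle_edges n) pc" by (rule dcond_dom[OF n4 _ d]) simp
  show "chi_dom {0..<n} (cycle_edges n) \<le> gc n"
    using chi_le[OF dc] img_card_le[OF pc_img] by (rule le_trans)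
  obtain c where c: "dominated_coloring {0..<n} (cycle_edges n) c" "card (c ` {0..<n}) = chi_dom {0..<n} (cycle_edges n)"
    using chi_ex dc unfolding has_dominated_coloring_def by blast
  obtain W where W: "W \<subseteq> {0..<n}" "n \<le> card (c`{0..<n}) + card W" "\<forall>w\<in>W. (w+2) mod n \<notin> W"
    using low[OF n4 _ c(1)] by blast
  have "2 * card W \<le> card {0..<n}"
  proof (rule cnt[where f="\<lambda>w. (w+2) mod n"])
    show "inj_on (\<lambda>w. (w + 2) mod n) W"
    proof (rule inj_onI)
      fix a b assume "a \<in> W" "b \<in> W" "(a + 2) mod n = (b + 2) mod n"
      moreover have "a < n" "b < n" using W(1) \<open>a \<in> W\<close> \<open>b \<in> W\<close> by auto
      ultimately show "a = b" using mod2_inj[of a n b] by blast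
    qed
  qed (use W n4 in auto)
  then have w1: "2 * card W \<le> n" by simp
  obtain X r where x: "n = 4*X+r" "r = 0 \<or> r=1 \<or> r=2 \<or> r=3" "n div 4 = X" "n mod 4 = r" "n mod 2 = r mod 2"
    by (rule d4o)
  have w2: "r = 2 \<longrightarrow> card W \<le> 2*X"
  proof
    assume "r = 2"
    then show "card W \<le> 2*X" using par[of n X W] x W by simp
  qed
  have "gc n \<le> n - card W" unfolding gc_def x(3,4) using gc_low_core[OF x(1)[symmetric] x(2) w1 w2] .
  then show "gc n \<le> chi_dom {0..<n} (cycle_edges n)" using W(2) c(2) by simp
qed


lemma low_forb:
  assumes n4: "n \<ge> 4" and sub: "F \<subseteq> cycle_edges n"
    and dc: "dominated_coloring {0..<n} (cycle_edges n - F) c" and finS: "finite S"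
    and forb: "\<forall>w<n. {(w+n-1) mod n, w} \<notin> F \<and> {w, (w+1) mod n} \<notin> F \<longrightarrow> w \<in> S \<and> (w+2) mod n \<in> S"
  shows "n \<le> card (c`{0..<n}) + card S div 2"
proof -
  obtain W where W: "W \<subseteq> {0..<n}" "n \<le> card (c`{0..<n}) + card W"
     "\<forall>w\<in>W. {(w+n-1) mod n, w} \<in> cycle_edges n - F \<and> {w, (w+1) mod n} \<in> cycle_edges n - F"
     "\<forall>w\<in>W. (w+2) mod n \<notin> W"
    using low[OF n4 _ dc] by blast
  have WS: "w \<in> S \<and> (w+2) mod n \<in> S" if "w \<in> W" for w
    using W(1,3) forb that by auto
  have "2 * card W \<le> card S"
  proof (rule cnt[where f="\<lambda>w. (w+2) mod n"])
    show "inj_on (\<lambda>w. (w + 2) mod n) W"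
    proof (rule inj_onI)
      fix a b assume "a \<in> W" "b \<in> W" "(a + 2) mod n = (b + 2) mod n"
      moreover have "a < n" "b < n" using W(1) \<open>a \<in> W\<close> \<open>b \<in> W\<close> by auto
      ultimately show "a = b" using mod2_inj[of a n b] by blast
    qed
  qed (use WS W(4) finS in auto)
  then show ?thesis using W(2) by simp
qed

lemma nbr_dcond: "(\<forall>u<n. \<exists>w<n. {u,w} \<in> E) \<Longrightarrow> dcond {0..<n} E id"
  unfolding dcond_def
proof
  fix u assume h: "\<forall>u<n. \<exists>w<n. {u,w} \<in> E" and u: "u \<in> {0..<n}"
  then obtain w where "w < n" "{u,w} \<in> E" by auto
  then show "\<exists>w\<in>{0..<n}. \<forall>v\<in>{0..<n}. id v = id u \<longrightarrow> {v, w} \<in> E" by auto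
qed

lemma cyc_wrap: "n \<ge> 4 \<Longrightarrow> {n-1, 0} \<in> cycle_edges n"
  by (subst cyc_adj2) auto

lemma cyc_in: "n \<ge> 4 \<Longrightarrow> a < n \<Longrightarrow> b < n \<Longrightarrow> b = a+1 \<or> a = b+1 \<Longrightarrow> {a,b} \<in> cycle_edges n"
  by (subst cyc_adj2) auto

lemma core_F0:
  "4*X+r = (n::nat) \<Longrightarrow> r = 0 \<or> r=1 \<or> r=3 \<Longrightarrow> n \<ge> 4 \<Longrightarrow> n \<le> k + (n-2) div 2 \<Longrightarrow> 2*X + min r 2 < k"
  by (elim disjE; simp?; presburger?)

lemma F0_props:
  assumes n4: "n \<ge> 4" and nm: "n mod 4 \<noteq> 2"
  defines "F0 \<equiv> {{n-1, 0}, {1, 2::nat}}"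
  shows "F0 \<subseteq> cycle_edges n" "card F0 = 2" "has_dominated_coloring {0..<n} (cycle_edges n - F0)"
    "chi_dom {0..<n} (cycle_edges n - F0) > gc n"
proof -
  show sub: "F0 \<subseteq> cycle_edges n" unfolding F0_def using cyc_in[OF n4, of 1 2] cyc_wrap[OF n4] n4 by auto
  show "card F0 = 2" unfolding F0_def using n4 by (auto simp: doubleton_eq_iff)
  have "\<forall>u<n. \<exists>w<n. {u,w} \<in> cycle_edges n - F0"
  proof (intro allI impI)
    fix u assume u: "u < n"
    consider "u = 0" | "u = 1" | "2 \<le> u \<and> u + 1 < n" | "u = n - 1" using u by linarith
    then show "\<exists>w<n. {u,w} \<in> cycle_edges n - F0"
    proof cases
      case 1 then show ?thesis using cyc_in[OF n4, of 0 1] n4 unfolding F0_def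
        by (intro exI[of _ 1]) (auto simp: doubleton_eq_iff)
    next
      case 2 then show ?thesis using cyc_in[OF n4, of 1 0] n4 unfolding F0_def
        by (intro exI[of _ 0]) (auto simp: doubleton_eq_iff)
    next
      case 3 then show ?thesis using cyc_in[OF n4, of u "u+1"] n4 unfolding F0_def
        by (intro exI[of _ "u+1"]) (auto simp: doubleton_eq_iff)
    next
      case 4
      have "{n-1, n-2} \<in> cycle_edges n" by (rule cyc_in[OF n4]) (use n4 in auto)
      then show ?thesis using 4 n4 unfolding F0_def
        by (intro exI[of _ "n-2"]) (auto simp: doubleton_eq_iff)
    qed
  qed
  then have hd: "dominated_coloring {0..<n} (cycle_edges n - F0) id"
    using dcond_dom[OF n4 _ nbr_dcond] by blast
  then show "has_dominated_coloring {0..<n} (cycle_edges n - F0)"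
    unfolding has_dominated_coloring_def by blast
  then obtain c where c: "dominated_coloring {0..<n} (cycle_edges n - F0) c"
     "card (c ` {0..<n}) = chi_dom {0..<n} (cycle_edges n - F0)"
    using chi_ex by blast
  define S where "S = insert 0 {3..<n}"
  have cS: "card S = n - 2" unfolding S_def using n4 by simp
  have forb: "\<forall>w<n. {(w+n-1) mod n, w} \<notin> F0 \<and> {w, (w+1) mod n} \<notin> F0 \<longrightarrow> w \<in> S \<and> (w+2) mod n \<in> S"
  proof (intro allI impI)
    fix w assume w: "w < n" and h: "{(w+n-1) mod n, w} \<notin> F0 \<and> {w, (w+1) mod n} \<notin> F0"
    have n2: "n \<ge> 2" using n4 by simp
    show "w \<in> S \<and> (w+2) mod n \<in> S"
      using h n4 w unfolding pv_eq[OF w] nx_eq[OF w] p2_eq[OF w n2] S_def F0_def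
      by (auto simp: doubleton_eq_iff split: if_splits)
  qed
  have "n \<le> card (c`{0..<n}) + card S div 2"
    by (rule low_forb[OF n4 sub c(1) _ forb]) (simp add: S_def)
  then have k: "n \<le> chi_dom {0..<n} (cycle_edges n - F0) + (n-2) div 2" using c(2) cS by simp
  obtain X r where x: "n = 4*X+r" "r = 0 \<or> r=1 \<or> r=2 \<or> r=3" "n div 4 = X" "n mod 4 = r" "n mod 2 = r mod 2"
    by (rule d4o)
  have "r = 0 \<or> r = 1 \<or> r = 3" using x(2,4) nm by auto
  from core_F0[OF x(1)[symmetric] this n4 k]
  show "chi_dom {0..<n} (cycle_edges n - F0) > gc n" unfolding gc_def x(3,4) .
qed


lemma core_F1:
  "4*X+2 = (n::nat) \<Longrightarrow> n \<ge> 4 \<Longrightarrow> n \<le> k + (n-4) div 2 \<Longrightarrow> 2*X + 2 < k"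
  by presburger

lemma F1_props:
  assumes n4: "n \<ge> 4" and nm: "n mod 4 = 2"
  defines "F1 \<equiv> {{n-1, 0}, {1, 2::nat}, {3, 4}}"
  shows "F1 \<subseteq> cycle_edges n" "card F1 = 3" "has_dominated_coloring {0..<n} (cycle_edges n - F1)"
    "chi_dom {0..<n} (cycle_edges n - F1) > gc n"
proof -
  have n6: "n \<ge> 6" using n4 nm by presburger
  show sub: "F1 \<subseteq> cycle_edges n" unfolding F1_def
    using cyc_in[OF n4, of 1 2] cyc_in[OF n4, of 3 4] cyc_wrap[OF n4] n6 by auto
  show "card F1 = 3" unfolding F1_def using n6 by (auto simp: doubleton_eq_iff)
  have "\<forall>u<n. \<exists>w<n. {u,w} \<in> cycle_edges n - F1"
  proof (intro allI impI)
    fix u assume u: "u < n"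
    consider "u = 0" | "u = 1" | "u = 2" | "u = 3" | "4 \<le> u \<and> u + 1 < n" | "u = n - 1" using u by linarith
    then show "\<exists>w<n. {u,w} \<in> cycle_edges n - F1"
    proof cases
      case 1 then show ?thesis using cyc_in[OF n4, of 0 1] n6 unfolding F1_def
        by (intro exI[of _ 1]) (auto simp: doubleton_eq_iff)
    next
      case 2 then show ?thesis using cyc_in[OF n4, of 1 0] n6 unfolding F1_def
        by (intro exI[of _ 0]) (auto simp: doubleton_eq_iff)
    next
      case 3 then show ?thesis using cyc_in[OF n4, of 2 3] n6 unfolding F1_def
        by (intro exI[of _ 3]) (auto simp: doubleton_eq_iff)
    next
      case 4 then show ?thesis using cyc_in[OF n4, of 3 2] n6 unfolding F1_def
        by (intro exI[of _ 2]) (auto simp: doubleton_eq_iff)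
    next
      case 5 then show ?thesis using cyc_in[OF n4, of u "u+1"] n6 unfolding F1_def
        by (intro exI[of _ "u+1"]) (auto simp: doubleton_eq_iff)
    next
      case 6
      have "{n-1, n-2} \<in> cycle_edges n" by (rule cyc_in[OF n4]) (use n4 in auto)
      then show ?thesis using 6 n6 unfolding F1_def
        by (intro exI[of _ "n-2"]) (auto simp: doubleton_eq_iff)
    qed
  qed
  then have hd: "dominated_coloring {0..<n} (cycle_edges n - F1) id"
    using dcond_dom[OF n4 _ nbr_dcond] by blast
  then show "has_dominated_coloring {0..<n} (cycle_edges n - F1)"
    unfolding has_dominated_coloring_def by blast
  then obtain c where c: "dominated_coloring {0..<n} (cycle_edges n - F1) c"
     "card (c ` {0..<n}) = chi_dom {0..<n} (cycle_edges n - F1)"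
    using chi_ex by blast
  define S where "S = insert 0 {5..<n}"
  have cS: "card S = n - 4" unfolding S_def using n6 by simp
  have forb: "\<forall>w<n. {(w+n-1) mod n, w} \<notin> F1 \<and> {w, (w+1) mod n} \<notin> F1 \<longrightarrow> w \<in> S \<and> (w+2) mod n \<in> S"
  proof (intro allI impI)
    fix w assume w: "w < n" and h: "{(w+n-1) mod n, w} \<notin> F1 \<and> {w, (w+1) mod n} \<notin> F1"
    have n2: "n \<ge> 2" using n4 by simp
    show "w \<in> S \<and> (w+2) mod n \<in> S"
    proof -
      have h1: "{(w+n-1) mod n, w} \<notin> F1" "{w, (w+1) mod n} \<notin> F1" using h by auto
      consider "w = 0" | "w = 1" | "w = 2" | "w = 3" | "w = 4" | "w = n - 1" | "5 \<le> w \<and> w + 2 \<le> n" using w by linarith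
      then show ?thesis
      proof cases
        case 1 then have "(w+n-1) mod n = n-1" using n6 by simp
        then show ?thesis using h1(1) 1 unfolding F1_def by simp
      next
        case 2 then have "(w+1) mod n = 2" using n6 by simp
        then show ?thesis using h1(2) 2 unfolding F1_def by simp
      next
        case 3 then have "(w+n-1) mod n = 1" using pv_eq[OF w] by simp
        then show ?thesis using h1(1) 3 unfolding F1_def by (simp add: doubleton_eq_iff)
      next
        case 4 then have "(w+1) mod n = 4" using n6 by simp
        then show ?thesis using h1(2) 4 unfolding F1_def by simp
      next
        case 5 then have "(w+n-1) mod n = 3" using pv_eq[OF w] by simp
        then show ?thesis using h1(1) 5 unfolding F1_def by (simp add: doubleton_eq_iff)
      next
        case 6 then have "(w+1) mod n = 0" using n6 by simp
        then show ?thesis using h1(2) 6 unfolding F1_def by simp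
      next
        case 7
        then have "(w+2) mod n = (if w+2 < n then w+2 else 0)" using p2_eq[OF w n2] by simp
        then show ?thesis using 7 w unfolding S_def by simp
      qed
    qed
  qed
  have "n \<le> card (c`{0..<n}) + card S div 2"
    by (rule low_forb[OF n4 sub c(1) _ forb]) (simp add: S_def)
  then have k: "n \<le> chi_dom {0..<n} (cycle_edges n - F1) + (n-4) div 2" using c(2) cS by simp
  obtain X r where x: "n = 4*X+r" "r = 0 \<or> r=1 \<or> r=2 \<or> r=3" "n div 4 = X" "n mod 4 = r" "n mod 2 = r mod 2"
    by (rule d4o)
  have "r = 2" using x(4) nm by simp
  have "4*X+2 = n" using x(1) \<open>r = 2\<close> by simp
  from core_F1[OF this n4 k]
  show "chi_dom {0..<n} (cycle_edges n - F1) > gc n" unfolding gc_def x(3,4) \<open>r = 2\<close> by simp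
qed


lemma rot_vals:
  assumes "j < n"
  shows "rot n (n-1-j) j = n-1" "rot n (n-1-j) ((j+1) mod n) = 0"
proof -
  show "rot n (n-1-j) j = n-1" unfolding rot_def using assms by simp
  have "rot n (n-1-j) ((j+1) mod n) = (j+1 + (n-1-j)) mod n" unfolding rot_def by (rule mod_add_left_eq)
  also have "j+1 + (n-1-j) = n" using assms by simp
  finally show "rot n (n-1-j) ((j+1) mod n) = 0" by simp
qed

lemma upper1:
  assumes n4: "n \<ge> 4" and e: "e \<in> cycle_edges n"
  shows "chi_dom {0..<n} (cycle_edges n - {e}) \<le> gc n"
proof -
  obtain j where j: "j < n" "e = {j, (j+1) mod n}" using e unfolding cycle_edges_def by blast
  define s where "s = n-1-j"
  have G: "(\<lambda>e. rot n s ` e) ` {e} = {{n-1, 0}}" using rot_vals[OF j(1)] j(2) unfolding s_def by simp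
  have "dcond {0..<n} (cycle_edges n - (\<lambda>e. rot n s ` e) ` {e}) pc" unfolding G by (rule path_dcond[OF n4])
  from rot_transfer[OF n4 _ this]
  have r: "dominated_coloring {0..<n} (cycle_edges n - {e}) (pc \<circ> rot n s)"
     "(pc \<circ> rot n s) ` {0..<n} = pc ` {0..<n}" using e by auto
  show ?thesis using chi_le[OF r(1)] img_card_le[OF pc_img] unfolding r(2) by (rule le_trans)
qed

lemma two_path:
  assumes n4: "n \<ge> 4" and k: "1 \<le> k" "k + 3 \<le> n"
  defines "c2 \<equiv> (\<lambda>i. if i \<le> k then pc i else gc (k+1) + pc (i - (k+1)))"
  shows "dcond {0..<n} (cycle_edges n - {{n-1,0},{k,k+1}}) c2"
    "c2 ` {0..<n} \<subseteq> {0..<gc (k+1) + gc (n-k-1)}"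
proof -
  show "c2 ` {0..<n} \<subseteq> {0..<gc (k+1) + gc (n-k-1)}"
  proof
    fix y assume "y \<in> c2 ` {0..<n}"
    then obtain i where i: "i < n" "y = c2 i" by auto
    show "y \<in> {0..<gc (k+1) + gc (n-k-1)}"
    proof (cases "i \<le> k")
      case True
      then have "pc i < gc (k+1)" using pc_lt by simp
      then show ?thesis using i True unfolding c2_def by simp
    next
      case False
      then have "pc (i - (k+1)) < gc (n-k-1)" using pc_lt i by simp
      then show ?thesis using i False unfolding c2_def by simp
    qed
  qed
  let ?E = "cycle_edges n - {{n-1,0},{k,k+1}}"
  show "dcond {0..<n} ?E c2" unfolding dcond_def
  proof
    fix u assume u: "u \<in> {0..<n}"
    show "\<exists>w\<in>{0..<n}. \<forall>v\<in>{0..<n}. c2 v = c2 u \<longrightarrow> {v, w} \<in> ?E"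
    proof (cases "u \<le> k")
      case True
      show ?thesis
      proof (rule seg_dcond[where a="k+1" and s=0 and off=0])
        show "\<forall>z. 0 \<le> z \<longrightarrow> z + 1 < 0 + (k+1) \<longrightarrow> {z, z + 1} \<in> ?E"
          using edge_in[OF n4] k by (auto simp: doubleton_eq_iff)
        show "\<forall>v\<in>{0..<n}. \<not> (0 \<le> v \<and> v < 0 + (k + 1)) \<longrightarrow> c2 v < 0 \<or> 0 + gc (k + 1) \<le> c2 v"
          unfolding c2_def by auto
      qed (use k True u in \<open>auto simp: c2_def\<close>)
    next
      case False
      show ?thesis
      proof (rule seg_dcond[where a="n-k-1" and s="k+1" and off="gc (k+1)"])
        show "\<forall>z. k+1 \<le> z \<longrightarrow> z + 1 < (k+1) + (n-k-1) \<longrightarrow> {z, z + 1} \<in> ?E"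
          using edge_in[OF n4] k by (auto simp: doubleton_eq_iff)
        show "\<forall>v\<in>{0..<n}. \<not> (k+1 \<le> v \<and> v < (k+1) + (n-k-1)) \<longrightarrow> c2 v < gc (k+1) \<or> gc (k+1) + gc (n-k-1) \<le> c2 v"
          unfolding c2_def using pc_lt by auto
      qed (use k False u in \<open>auto simp: c2_def\<close>)
    qed
  qed
qed

lemma gsum_core:
  "4*A+r + (4*B+t) = 4*X+(2::nat) \<Longrightarrow> r = 0 \<or> r=1 \<or> r=2 \<or> r=3 \<Longrightarrow> t = 0 \<or> t=1 \<or> t=2 \<or> t=3 \<Longrightarrow>
   2*A + min r 2 + (2*B + min t 2) \<le> 2*X + min 2 2"
  by (elim disjE; simp?; presburger?)

lemma gsum:
  assumes "n mod 4 = 2" "a + b = n"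
  shows "gc a + gc b \<le> gc n"
proof -
  obtain X r where x: "n = 4*X+r" "r = 0 \<or> r=1 \<or> r=2 \<or> r=3" "n div 4 = X" "n mod 4 = r" "n mod 2 = r mod 2"
    by (rule d4o)
  obtain A p where xa: "a = 4*A+p" "p = 0 \<or> p=1 \<or> p=2 \<or> p=3" "a div 4 = A" "a mod 4 = p" "a mod 2 = p mod 2"
    by (rule d4o)
  obtain B t where xb: "b = 4*B+t" "t = 0 \<or> t=1 \<or> t=2 \<or> t=3" "b div 4 = B" "b mod 4 = t" "b mod 2 = t mod 2"
    by (rule d4o)
  have r2: "r = 2" using x(4) assms(1) by simp
  have "4*A+p + (4*B+t) = 4*X+2" using assms(2) x(1) xa(1) xb(1) r2 by simp
  from gsum_core[OF this xa(2) xb(2)]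
  show ?thesis unfolding gc_def x(3,4) xa(3,4) xb(3,4) r2 .
qed


lemma edge_sub: "e \<in> cycle_edges n \<Longrightarrow> e \<subseteq> {0..<n}"
  unfolding cycle_edges_def by auto

lemma upper2:
  assumes n4: "n \<ge> 4" and nm: "n mod 4 = 2" and sub: "F \<subseteq> cycle_edges n" and cF: "card F = 2"
    and hd: "has_dominated_coloring {0..<n} (cycle_edges n - F)"
  shows "chi_dom {0..<n} (cycle_edges n - F) \<le> gc n"
proof -
  have "\<exists>x y. F = {x,y} \<and> x \<noteq> y" using cF by (simp only: card_2_iff)
  then obtain e1 e2 where F: "F = {e1,e2}" "e1 \<noteq> e2" by (elim exE conjE)
  have e12: "e1 \<in> cycle_edges n" "e2 \<in> cycle_edges n" using F sub by auto
  obtain j where j: "j < n" "e1 = {j, (j+1) mod n}" using e12(1) unfolding cycle_edges_def by blast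
  obtain k0 where k0: "k0 < n" "e2 = {k0, (k0+1) mod n}" using e12(2) unfolding cycle_edges_def by blast
  define s where "s = n-1-j"
  define k where "k = rot n s k0"
  have kn: "k < n" unfolding k_def rot_def using n4 by simp
  have r1: "rot n s ` e1 = {n-1, 0}" using rot_vals[OF j(1)] j(2) unfolding s_def by simp
  have r2: "rot n s ` e2 = {k, (k+1) mod n}" using k0(2) rot_nx[of n s k0] unfolding k_def by simp
  have G: "(\<lambda>e. rot n s ` e) ` F = {{n-1, 0}, {k, (k+1) mod n}}" using F(1) r1 r2 by simp
  have "k \<noteq> n - 1"
  proof
    assume "k = n - 1"
    then have "rot n s ` e2 = rot n s ` e1" using r1 r2 n4 by (simp add: insert_commute)
    then have "e2 = e1" using inj_on_image_eq_iff[OF rot_inj edge_sub[OF e12(2)] edge_sub[OF e12(1)]] by simp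
    then show False using F(2) by simp
  qed
  have n2: "n \<ge> 2" using n4 by simp
  have "k \<noteq> 0"
  proof
    assume k0': "k = 0"
    obtain z where z: "z < n" "{0,z} \<in> cycle_edges n - (\<lambda>e. rot n s ` e) ` F"
      using nbr_transfer[OF n4 sub hd, of 0 s] n4 by auto
    then have "z = 1 \<or> z = n - 1" using cyc_adj2[OF n2, of 0 z] by auto
    then show False using z(2) unfolding G k0' using n4 by (auto simp: insert_commute)
  qed
  have "k \<noteq> n - 2"
  proof
    assume k0': "k = n - 2"
    obtain z where z: "z < n" "{n-1,z} \<in> cycle_edges n - (\<lambda>e. rot n s ` e) ` F"
      using nbr_transfer[OF n4 sub hd, of "n-1" s] n4 by auto
    then have "z = n - 2 \<or> z = 0" using cyc_adj2[OF n2, of "n-1" z] n4 by auto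
    moreover have "(n - 2 + 1) mod n = n - 1" using n4 by simp
    ultimately show False using z(2) unfolding G k0' using n4 by (auto simp: insert_commute)
  qed
  have kb: "1 \<le> k" "k + 3 \<le> n" using \<open>k \<noteq> 0\<close> \<open>k \<noteq> n-1\<close> \<open>k \<noteq> n-2\<close> kn by auto
  have "(k+1) mod n = k+1" using kb by simp
  then have G2: "(\<lambda>e. rot n s ` e) ` F = {{n-1, 0}, {k, k+1}}" using G by simp
  define c2 where "c2 = (\<lambda>i. if i \<le> k then pc i else gc (k+1) + pc (i - (k+1)))"
  have tp: "dcond {0..<n} (cycle_edges n - {{n-1,0},{k,k+1}}) c2"
    "c2 ` {0..<n} \<subseteq> {0..<gc (k+1) + gc (n-k-1)}"
    using two_path[OF n4 kb] unfolding c2_def by blast+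
  have "dcond {0..<n} (cycle_edges n - (\<lambda>e. rot n s ` e) ` F) c2" using tp(1) unfolding G2 .
  from rot_transfer[OF n4 sub this]
  have r: "dominated_coloring {0..<n} (cycle_edges n - F) (c2 \<circ> rot n s)"
     "(c2 \<circ> rot n s) ` {0..<n} = c2 ` {0..<n}" by auto
  have "chi_dom {0..<n} (cycle_edges n - F) \<le> gc (k+1) + gc (n-k-1)"
    using chi_le[OF r(1)] img_card_le[OF tp(2)] unfolding r(2) by (rule le_trans)
  also have "\<dots> \<le> gc n" by (rule gsum[OF nm]) (use kb in simp)
  finally show ?thesis .
qed

lemma chi_ge:
  assumes n4: "n \<ge> 4" and sub: "F \<subseteq> cycle_edges n"
    and hd: "has_dominated_coloring {0..<n} (cycle_edges n - F)"
  shows "chi_dom {0..<n} (cycle_edges n) \<le> chi_dom {0..<n} (cycle_edges n - F)"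
proof -
  obtain c where c: "dominated_coloring {0..<n} (cycle_edges n - F) c"
     "card (c ` {0..<n}) = chi_dom {0..<n} (cycle_edges n - F)"
    using chi_ex[OF hd] by blast
  have "dcond {0..<n} (cycle_edges n) c" by (rule dom_dcond[OF c(1)]) auto
  then have "dominated_coloring {0..<n} (cycle_edges n) c" using dcond_dom[OF n4] by blast
  then show ?thesis using chi_le c(2) by metis
qed

theorem mainTheorem14:
  fixes n :: nat
  assumes "n \<ge> 4"
  shows "B_dom {0..<n} (cycle_edges n) = (if n mod 4 = 2 then 3 else 2)"
  unfolding B_dom_def
proof (rule Least_equality)
  note n4 = assms
  have chiC: "chi_dom {0..<n} (cycle_edges n) = gc n" by (rule chi_cyc[OF n4])
  show "\<exists>F\<subseteq>cycle_edges n. card F = (if n mod 4 = 2 then 3 else 2) \<and> has_dominated_coloring {0..<n} (cycle_edges n - F) \<and>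
          chi_dom {0..<n} (cycle_edges n - F) \<noteq> chi_dom {0..<n} (cycle_edges n)"
  proof (cases "n mod 4 = 2")
    case True
    note p = F1_props[OF n4 True]
    show ?thesis using True p chiC by (intro exI[of _ "{{n-1, 0}, {1, 2::nat}, {3, 4}}"]) auto
  next
    case False
    note p = F0_props[OF n4 False]
    show ?thesis using False p chiC by (intro exI[of _ "{{n-1, 0}, {1, 2::nat}}"]) auto
  qed
  fix y assume "\<exists>F\<subseteq>cycle_edges n. card F = y \<and> has_dominated_coloring {0..<n} (cycle_edges n - F) \<and>
          chi_dom {0..<n} (cycle_edges n - F) \<noteq> chi_dom {0..<n} (cycle_edges n)"
  then obtain F where F: "F \<subseteq> cycle_edges n" "card F = y" "has_dominated_coloring {0..<n} (cycle_edges n - F)"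
    "chi_dom {0..<n} (cycle_edges n - F) \<noteq> chi_dom {0..<n} (cycle_edges n)" by blast
  have finF: "finite F" using F(1) cyc_fin finite_subset by blast
  have ge: "chi_dom {0..<n} (cycle_edges n) \<le> chi_dom {0..<n} (cycle_edges n - F)"
    by (rule chi_ge[OF n4 F(1) F(3)])
  show "(if n mod 4 = 2 then 3 else 2) \<le> y"
  proof (rule ccontr)
    assume "\<not> (if n mod 4 = 2 then 3 else 2) \<le> y"
    then have cases: "y = 0 \<or> y = 1 \<or> (y = 2 \<and> n mod 4 = 2)" by (auto split: if_splits)
    have "chi_dom {0..<n} (cycle_edges n - F) \<le> chi_dom {0..<n} (cycle_edges n)"
    proof -
      { assume "y = 0"
        then have "F = {}" using F(2) finF by simp
        then have ?thesis by simp }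
      moreover
      { assume "y = 1"
        then have "card F = Suc 0" using F(2) by simp
        then have "\<exists>x. F = {x}" by (simp only: card_1_singleton_iff)
        then obtain e where "F = {e}" by (elim exE)
        then have ?thesis using upper1[OF n4, of e] F(1) chiC by simp }
      moreover
      { assume "y = 2 \<and> n mod 4 = 2"
        then have ?thesis using upper2[OF n4 _ F(1) _ F(3)] F(2) chiC by simp }
      ultimately show ?thesis using cases by blast
    qed
    then show False using ge F(4) by simp
  qed
qed

end
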